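(* Let $G$ be a finite group. Then the commuting graph $\Gamma_C(G)$ is minimally edge connected if and only if $G$ is abelian.
   Context: The commuting graph $\Gamma_C(G)$ of a group $G$ is the simple undirected graph with vertex set $G$ in which two distinct elements $x,y$ are adjacent if and only if $xy=yx$. For a connected graph $\Gamma$, an edge cut-set is a set $S$ of edges such that $\Gamma-S$ is disconnected or has just one vertex, and the edge connectivity $\kappa'(\Gamma)$ is the smallest size of an edge cut-set. $\Gamma$ is minimally edge connected if $\kappa'(\Gamma-\epsilon)=\kappa'(\Gamma)-1$ for every edge $\epsilon$ of $\Gamma$. *)

theory Defs
  imports "HOL-Algebra.Group"
begin

text \<open>Finite simple undirected graphs are represented by a vertex set V and an
edge set E of two-element subsets of V.\<close>

definition graph_adj :: "'a set set \<Rightarrow> 'a \<Rightarrow> 'a \<Rightarrow> bool" where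
  "graph_adj E x y \<longleftrightarrow> x \<noteq> y \<and> {x, y} \<in> E"

definition graph_connected :: "'a set \<Rightarrow> 'a set set \<Rightarrow> bool" where
  "graph_connected V E \<longleftrightarrow> V \<noteq> {} \<and>
     (\<forall>u\<in>V. \<forall>v\<in>V. (graph_adj E)\<^sup>*\<^sup>* u v)"

definition edge_cut_set :: "'a set \<Rightarrow> 'a set set \<Rightarrow> 'a set set \<Rightarrow> bool" where
  "edge_cut_set V E S \<longleftrightarrow> S \<subseteq> E \<and>
     (\<not> graph_connected V (E - S) \<or> card V = 1)"

definition edge_connectivity :: "'a set \<Rightarrow> 'a set set \<Rightarrow> nat" where
  "edge_connectivity V E = (LEAST k. \<exists>S. edge_cut_set V E S \<and> finite S \<and> card S = k)"

definition minimally_edge_connected :: "'a set \<Rightarrow> 'a set set \<Rightarrow> bool" where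
  "minimally_edge_connected V E \<longleftrightarrow>
     (\<forall>e\<in>E. int (edge_connectivity V (E - {e})) = int (edge_connectivity V E) - 1)"

definition commuting_graph_edges :: "('a, 'b) monoid_scheme \<Rightarrow> 'a set set" where
  "commuting_graph_edges G =
     {{x, y} | x y. x \<in> carrier G \<and> y \<in> carrier G \<and> x \<noteq> y \<and>
                    x \<otimes>\<^bsub>G\<^esub> y = y \<otimes>\<^bsub>G\<^esub> x}"

end

theory Submission
  imports Defs "HOL-Algebra.Group_Action"
begin

definition deg :: "'a set \<Rightarrow> 'a set set \<Rightarrow> 'a \<Rightarrow> nat" where
  "deg V E v = card {u \<in> V. u \<noteq> v \<and> {u, v} \<in> E}"

definition cross :: "'a set set \<Rightarrow> 'a set \<Rightarrow> 'a set \<Rightarrow> 'a set set" where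
  "cross E A B = {{a, b} | a b. a \<in> A \<and> b \<in> B \<and> {a, b} \<in> E}"

lemma cross_sub: "cross E A B \<subseteq> cross E B A"
proof
  fix e assume "e \<in> cross E A B"
  then obtain a b where "e = {a, b}" "a \<in> A" "b \<in> B" "{a, b} \<in> E" unfolding cross_def by blast
  moreover have "{a, b} = {b, a}" by (rule insert_commute)
  ultimately show "e \<in> cross E B A" unfolding cross_def by auto
qed

lemma cross_sym: "cross E A B = cross E B A"
  using cross_sub[of E A B] cross_sub[of E B A] by (rule subset_antisym)

lemma reach_isolated:
  assumes "(graph_adj E)\<^sup>*\<^sup>* v w" "\<And>x. \<not> graph_adj E v x"
  shows "w = v"
  using assms(1) by (rule converse_rtranclpE) (use assms(2) in auto)

lemma cut_lower:
  assumes "edge_cut_set V E S" "finite S" "2 \<le> card V"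
    and H: "\<And>A B. A \<union> B = V \<Longrightarrow> A \<inter> B = {} \<Longrightarrow> A \<noteq> {} \<Longrightarrow> B \<noteq> {} \<Longrightarrow> d \<le> card (cross E A B)"
  shows "d \<le> card S"
proof -
  have SE: "S \<subseteq> E" and nc: "\<not> graph_connected V (E - S)" using assms(1,3) unfolding edge_cut_set_def by auto
  have "V \<noteq> {}" using assms(3) by auto
  then obtain u w where u: "u \<in> V" and w: "w \<in> V" and nr: "\<not> (graph_adj (E - S))\<^sup>*\<^sup>* u w"
    using nc unfolding graph_connected_def by blast
  define A where "A = {x \<in> V. (graph_adj (E - S))\<^sup>*\<^sup>* u x}"
  define B where "B = V - A"
  have "cross E A B \<subseteq> S"
  proof
    fix e assume "e \<in> cross E A B"
    then obtain a b where e: "e = {a, b}" and a: "a \<in> A" and b: "b \<in> B" and ab: "{a, b} \<in> E"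
      unfolding cross_def by blast
    show "e \<in> S"
    proof (rule ccontr)
      assume "e \<notin> S"
      have "a \<noteq> b" using a b unfolding B_def by auto
      hence "graph_adj (E - S) a b" using \<open>e \<notin> S\<close> ab e unfolding graph_adj_def by auto
      hence "(graph_adj (E - S))\<^sup>*\<^sup>* u b" using a unfolding A_def by auto
      thus False using b unfolding A_def B_def by auto
    qed
  qed
  hence "card (cross E A B) \<le> card S" using assms(2) by (simp add: card_mono)
  moreover have "d \<le> card (cross E A B)"
    apply (rule H) using u w nr unfolding A_def B_def by auto
  ultimately show ?thesis by simp
qed

lemma ec_eq:
  assumes fin: "finite V" and two: "2 \<le> card V" and v: "v \<in> V" and dv: "deg V E v = d"
    and EV: "\<And>e. e \<in> E \<Longrightarrow> e \<subseteq> V"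
    and H: "\<And>A B. A \<union> B = V \<Longrightarrow> A \<inter> B = {} \<Longrightarrow> A \<noteq> {} \<Longrightarrow> B \<noteq> {} \<Longrightarrow> d \<le> card (cross E A B)"
  shows "edge_connectivity V E = d"
proof -
  define N where "N = {u \<in> V. u \<noteq> v \<and> {u, v} \<in> E}"
  define S0 where "S0 = (\<lambda>u. {u, v}) ` N"
  have fN: "finite N" using fin unfolding N_def by auto
  have c0: "card S0 \<le> d" using dv unfolding S0_def deg_def N_def[symmetric] by (rule subst) (rule card_image_le[OF fN])
  have S0E: "S0 \<subseteq> E" unfolding S0_def N_def by auto
  obtain w where w: "w \<in> V" "w \<noteq> v"
  proof -
    have "\<not> V \<subseteq> {v}"
    proof
      assume "V \<subseteq> {v}"
      hence "card V \<le> card {v}" by (intro card_mono) simp_all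
      thus False using two by simp
    qed
    thus ?thesis using that by blast
  qed
  have iso: "\<And>x. \<not> graph_adj (E - S0) v x"
  proof
    fix x assume "graph_adj (E - S0) v x"
    hence "x \<noteq> v" "{v, x} \<in> E" "{v,x} \<notin> S0" unfolding graph_adj_def by auto
    moreover have "x \<in> V" using EV[OF \<open>{v, x} \<in> E\<close>] by auto
    ultimately show False unfolding S0_def N_def by (auto simp: insert_commute)
  qed
  have "\<not> graph_connected V (E - S0)"
  proof
    assume "graph_connected V (E - S0)"
    hence "(graph_adj (E - S0))\<^sup>*\<^sup>* v w" using v w(1) unfolding graph_connected_def by blast
    hence "w = v" by (rule reach_isolated) (rule iso)
    thus False using w(2) by simp
  qed
  hence cut0: "edge_cut_set V E S0" using S0E unfolding edge_cut_set_def by auto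
  have fS0: "finite S0" unfolding S0_def using fN by simp
  define P where "P = (\<lambda>k. \<exists>S. edge_cut_set V E S \<and> finite S \<and> card S = k)"
  have P0: "P (card S0)" unfolding P_def using cut0 fS0 by auto
  have "Least P \<le> card S0" by (rule Least_le[of P, OF P0])
  moreover have "P (Least P)" by (rule LeastI[of P, OF P0])
  then obtain S where S: "edge_cut_set V E S" "finite S" "card S = Least P" unfolding P_def by blast
  have "d \<le> card S" using S(1,2) two H by (rule cut_lower)
  hence "d \<le> Least P" using S(3) by simp
  ultimately show ?thesis unfolding edge_connectivity_def P_def[symmetric] using c0 by linarith
qed


lemma count_lemma:
  assumes fin: "finite V" and AB: "A \<union> B = V" "A \<inter> B = {}" and Bne: "B \<noteq> {}"
    and adj: "\<And>b. b \<in> B \<Longrightarrow> b \<noteq> y \<Longrightarrow> \<exists>a\<in>A. {a, b} \<in> E"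
    and dg: "\<And>b. b \<in> B \<Longrightarrow> d \<le> deg V E b"
  shows "d \<le> card (cross E A B)"
proof -
  define N where "N = (\<lambda>b. {a \<in> A. {a, b} \<in> E})"
  have fA: "finite A" and fB: "finite B" using fin AB by auto
  have fN: "\<And>b. finite (N b)" unfolding N_def using fA by auto
  have sumc: "(\<Sum>b\<in>B. card (N b)) = card (Sigma B N)"
    using card_SigmaI[OF fB, of N] fN by simp
  define f where "f = (\<lambda>(b::'a, a::'a). {a, b})"
  have inj: "inj_on f (Sigma B N)"
  proof (rule inj_onI)
    fix p q assume p: "p \<in> Sigma B N" and q: "q \<in> Sigma B N" and fpq: "f p = f q"
    obtain b a where pe: "p = (b, a)" by (cases p)
    obtain b' a' where qe: "q = (b', a')" by (cases q)
    have "a \<in> A" "b \<in> B" "a' \<in> A" "b' \<in> B" using p q pe qe unfolding N_def by auto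
    moreover have "{a, b} = {a', b'}" using fpq pe qe unfolding f_def by simp
    ultimately show "p = q" using pe qe AB(2) by (auto simp: doubleton_eq_iff)
  qed
  have img: "f ` Sigma B N \<subseteq> cross E A B" unfolding f_def N_def cross_def by auto
  have fc: "finite (cross E A B)"
  proof -
    have "cross E A B \<subseteq> (\<lambda>(a, b). {a, b}) ` (A \<times> B)" unfolding cross_def by auto
    thus ?thesis using fA fB by (meson finite_SigmaI finite_imageI finite_subset)
  qed
  have le1: "(\<Sum>b\<in>B. card (N b)) \<le> card (cross E A B)"
    using sumc card_inj_on_le[OF inj img fc] by simp
  define k where "k = card B"
  have k1: "1 \<le> k" using Bne fB unfolding k_def by (simp add: Suc_leI card_gt_0_iff)
  have gb: "d \<le> card (N b) + (k - 1)" if b: "b \<in> B" for b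
  proof -
    have "{u \<in> V. u \<noteq> b \<and> {u, b} \<in> E} \<subseteq> N b \<union> (B - {b})" using AB unfolding N_def by auto
    hence "deg V E b \<le> card (N b \<union> (B - {b}))" unfolding deg_def
      using fN fB by (simp add: card_mono)
    also have "\<dots> \<le> card (N b) + card (B - {b})" by (rule card_Un_le)
    also have "card (B - {b}) = k - 1" using b fB unfolding k_def by simp
    finally show ?thesis using dg[OF b] by linarith
  qed
  have "d \<le> (\<Sum>b\<in>B. card (N b))"
  proof (cases "k \<le> d")
    case True
    have "(\<Sum>b\<in>B. d) \<le> (\<Sum>b\<in>B. card (N b) + (k - 1))" by (rule sum_mono) (rule gb)
    hence s1: "k * d \<le> (\<Sum>b\<in>B. card (N b)) + k * (k - 1)" unfolding k_def by (simp add: sum.distrib)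
    have s2: "k * (k - 1) \<le> d * (k - 1)" using True by simp
    have s3: "k * d = d * (k - 1) + d" using k1 by (cases k) auto
    show ?thesis using s1 s2 s3 by linarith
  next
    case False
    have "(\<Sum>b\<in>B - {y}. 1) \<le> (\<Sum>b\<in>B - {y}. card (N b))"
    proof (rule sum_mono)
      fix b assume "b \<in> B - {y}"
      hence "N b \<noteq> {}" using adj unfolding N_def by auto
      thus "1 \<le> card (N b)" using fN by (simp add: Suc_leI card_gt_0_iff)
    qed
    also have "\<dots> \<le> (\<Sum>b\<in>B. card (N b))" using fB by (intro sum_mono2) auto
    finally have "card (B - {y}) \<le> (\<Sum>b\<in>B. card (N b))" by simp
    moreover have "k - 1 \<le> card (B - {y})" unfolding k_def using diff_card_le_card_Diff[OF finite.insertI[OF finite.emptyI], of B y] by simp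
    ultimately show ?thesis using False by linarith
  qed
  thus ?thesis using le1 by linarith
qed


lemma deg_minus_out:
  assumes "v \<notin> e"
  shows "deg V (E - {e}) v = deg V E v"
proof -
  have "{u \<in> V. u \<noteq> v \<and> {u, v} \<in> E - {e}} = {u \<in> V. u \<noteq> v \<and> {u, v} \<in> E}" using assms by auto
  thus ?thesis unfolding deg_def by simp
qed

lemma deg_minus_in:
  assumes "finite V" "p \<noteq> q" "q \<in> V" "{q, p} \<in> E"
  shows "deg V (E - {{q, p}}) p = deg V E p - 1"
proof -
  have "{u \<in> V. u \<noteq> p \<and> {u, p} \<in> E - {{q, p}}} = {u \<in> V. u \<noteq> p \<and> {u, p} \<in> E} - {q}"
    using assms(2) by (auto simp: doubleton_eq_iff)
  moreover have "q \<in> {u \<in> V. u \<noteq> p \<and> {u, p} \<in> E}" using assms by auto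
  ultimately show ?thesis unfolding deg_def using assms(1) by simp
qed


lemma hub_lemma:
  assumes fin: "finite V" and AB: "A \<union> B = V" "A \<inter> B = {}" "A \<noteq> {}" "B \<noteq> {}"
    and h: "h \<in> V" and dg: "\<And>v. v \<in> V \<Longrightarrow> d \<le> deg V E v"
    and adj: "\<And>v. v \<in> V \<Longrightarrow> v \<noteq> h \<Longrightarrow> v \<noteq> y \<Longrightarrow> {h, v} \<in> E"
  shows "d \<le> card (cross E A B)"
proof (cases "h \<in> A")
  case True
  show ?thesis
  proof (rule count_lemma[OF fin AB(1,2,4), where y = y])
    fix b assume b: "b \<in> B" "b \<noteq> y"
    have "b \<noteq> h" using b True AB(2) by blast
    moreover have "b \<in> V" using b AB(1) by blast
    ultimately show "\<exists>a\<in>A. {a, b} \<in> E" using adj b True by blast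
  next
    fix b assume "b \<in> B" thus "d \<le> deg V E b" using dg AB(1) by blast
  qed
next
  case False
  hence hB: "h \<in> B" using h AB(1) by blast
  have AB': "B \<union> A = V" "B \<inter> A = {}" using AB by blast+
  have "d \<le> card (cross E B A)"
  proof (rule count_lemma[OF fin AB' AB(3), where y = y])
    fix b assume b: "b \<in> A" "b \<noteq> y"
    have "b \<noteq> h" using b False by blast
    moreover have "b \<in> V" using b AB(1) by blast
    ultimately show "\<exists>a\<in>B. {a, b} \<in> E" using adj b hB by blast
  next
    fix b assume "b \<in> A" thus "d \<le> deg V E b" using dg AB(1) by blast
  qed
  thus ?thesis using cross_sym by metis
qed

definition cent :: "('a, 'b) monoid_scheme \<Rightarrow> 'a \<Rightarrow> 'a set" where
  "cent G x = {g \<in> carrier G. x \<otimes>\<^bsub>G\<^esub> g = g \<otimes>\<^bsub>G\<^esub> x}"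

context group
begin

lemma CE_iff: "{u, x} \<in> commuting_graph_edges G \<longleftrightarrow>
   u \<in> carrier G \<and> x \<in> carrier G \<and> u \<noteq> x \<and> u \<otimes> x = x \<otimes> u"
proof
  assume "{u, x} \<in> commuting_graph_edges G"
  then obtain a b where ab: "{u, x} = {a, b}" "a \<in> carrier G" "b \<in> carrier G" "a \<noteq> b"
    "a \<otimes> b = b \<otimes> a" unfolding commuting_graph_edges_def by blast
  from ab(1) have "(u = a \<and> x = b) \<or> (u = b \<and> x = a)" by (simp add: doubleton_eq_iff)
  thus "u \<in> carrier G \<and> x \<in> carrier G \<and> u \<noteq> x \<and> u \<otimes> x = x \<otimes> u"
    using ab(2-5) by auto
next
  assume "u \<in> carrier G \<and> x \<in> carrier G \<and> u \<noteq> x \<and> u \<otimes> x = x \<otimes> u"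
  thus "{u, x} \<in> commuting_graph_edges G" unfolding commuting_graph_edges_def by blast
qed

lemma CE_sub: "e \<in> commuting_graph_edges G \<Longrightarrow> e \<subseteq> carrier G"
  unfolding commuting_graph_edges_def by auto

lemma deg_CE:
  assumes "finite (carrier G)" "x \<in> carrier G"
  shows "deg (carrier G) (commuting_graph_edges G) x = card (cent G x) - 1"
proof -
  have "{u \<in> carrier G. u \<noteq> x \<and> {u, x} \<in> commuting_graph_edges G} = cent G x - {x}"
  proof (rule Set.set_eqI)
    fix u
    show "u \<in> {u \<in> carrier G. u \<noteq> x \<and> {u, x} \<in> commuting_graph_edges G} \<longleftrightarrow> u \<in> cent G x - {x}"
      unfolding cent_def using CE_iff[of u x] assms(2) eq_commute[of "u \<otimes> x" "x \<otimes> u"] by blast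
  qed
  moreover have "x \<in> cent G x" unfolding cent_def using assms(2) by simp
  moreover have "finite (cent G x)" unfolding cent_def using assms(1) by simp
  ultimately show ?thesis unfolding deg_def by simp
qed

lemma cent_sub: "cent G x \<subseteq> carrier G" unfolding cent_def by auto

lemma one_cent: "x \<in> carrier G \<Longrightarrow> \<one> \<in> cent G x" unfolding cent_def by simp

lemma stab_cent:
  assumes x: "x \<in> carrier G"
  shows "stabilizer G (\<lambda>g. (\<lambda>h \<in> carrier G. g \<otimes> h \<otimes> (inv g))) x = cent G x"
proof (rule Set.set_eqI)
  fix g
  show "g \<in> stabilizer G (\<lambda>g. (\<lambda>h \<in> carrier G. g \<otimes> h \<otimes> (inv g))) x \<longleftrightarrow> g \<in> cent G x"
  proof (cases "g \<in> carrier G")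
    case True
    have e1: "(x = g \<otimes> x \<otimes> inv g) = (g \<otimes> x = x \<otimes> g)"
      by (rule inv_solve_right) (simp_all add: True x)
    have e2: "(\<lambda>h \<in> carrier G. g \<otimes> h \<otimes> (inv g)) x = g \<otimes> x \<otimes> inv g" using x by (rule restrict_apply')
    show ?thesis unfolding stabilizer_def cent_def mem_Collect_eq e2 using True e1 by metis
  next
    case False
    thus ?thesis unfolding stabilizer_def cent_def by blast
  qed
qed

lemma exists_big_cent:
  assumes fin: "finite (carrier G)" and a: "a \<in> carrier G" and b: "b \<in> carrier G"
    and nab: "a \<otimes> b \<noteq> b \<otimes> a"
    and x0: "x0 \<in> carrier G" and min: "\<And>x. x \<in> carrier G \<Longrightarrow> card (cent G x0) \<le> card (cent G x)"
  shows "\<exists>y\<in>carrier G. y \<noteq> \<one> \<and> card (cent G x0) < card (cent G y)"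
proof (rule ccontr)
  assume nt: "\<not> (\<exists>y\<in>carrier G. y \<noteq> \<one> \<and> card (cent G x0) < card (cent G y))"
  define c0 where "c0 = card (cent G x0)"
  define n where "n = card (carrier G)"
  have cy: "card (cent G y) = c0" if y: "y \<in> carrier G" "y \<noteq> \<one>" for y
  proof -
    have "\<not> c0 < card (cent G y)" using nt y unfolding c0_def by blast
    moreover have "c0 \<le> card (cent G y)" using min[OF y(1)] unfolding c0_def .
    ultimately show ?thesis by linarith
  qed
  have "cent G a \<subset> carrier G" using cent_sub b nab unfolding cent_def by auto
  hence "card (cent G a) < n" unfolding n_def using fin by (simp add: psubset_card_mono)
  hence c0n: "c0 < n" using min[OF a] unfolding c0_def by simp
  have c1: "cent G \<one> = carrier G" unfolding cent_def by auto
  define \<phi> where "\<phi> = (\<lambda>g. (\<lambda>h \<in> carrier G. g \<otimes> h \<otimes> (inv g)))"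
  interpret A: group_action G "carrier G" \<phi> unfolding \<phi>_def by (rule action_by_conjugation)
  have st: "\<And>x. x \<in> carrier G \<Longrightarrow> card (stabilizer G \<phi> x) = card (cent G x)"
    unfolding \<phi>_def using stab_cent by simp
  have "(\<Sum>x\<in>carrier G. card (stabilizer G \<phi> x)) = (\<Sum>orb\<in>orbits G (carrier G) \<phi>. \<Sum>x\<in>orb. card (stabilizer G \<phi> x))"
    using A.disjoint_sum[OF fin, of "\<lambda>x. card (stabilizer G \<phi> x)"] by simp
  also have "\<dots> = (\<Sum>orb\<in>orbits G (carrier G) \<phi>. n)"
    using A.card_stablizer_sum[OF fin] unfolding n_def order_def by simp
  finally have s1: "(\<Sum>x\<in>carrier G. card (cent G x)) = card (orbits G (carrier G) \<phi>) * n"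
    using st by simp
  have "(\<Sum>x\<in>carrier G. card (cent G x)) = card (cent G \<one>) + (\<Sum>x\<in>carrier G - {\<one>}. card (cent G x))"
    using fin by (simp add: sum.remove[OF fin one_closed])
  also have "\<dots> = n + (n - 1) * c0" using cy c1 fin unfolding n_def by simp
  finally have s2: "n + (n - 1) * c0 = card (orbits G (carrier G) \<phi>) * n" using s1 by simp
  define m where "m = card (orbit G \<phi> x0)"
  have mn: "m * c0 = n" using A.orbit_stabilizer_theorem[OF x0] st[OF x0]
    unfolding m_def c0_def n_def order_def by simp
  have c0pos: "0 < c0" unfolding c0_def using one_cent[OF x0] fin cent_sub
    by (metis card_gt_0_iff empty_iff finite_subset)
  define K where "K = card (orbits G (carrier G) \<phi>)"
  have n1: "1 \<le> n" using c0n by simp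
  have i0: "int (n + (n - 1) * c0) = int (K * n)" using s2 unfolding K_def by simp
  hence i1: "int n + (int n - 1) * int c0 = int K * int n" using n1 by (simp add: of_nat_diff)
  have imn: "int m * int c0 = int n" using mn by (metis of_nat_mult)
  have "(int m + int m * int c0 - 1) * int c0 = (int K * int m) * int c0"
    using i1 imn by (simp add: algebra_simps)
  hence i2: "int m + int m * int c0 - 1 = int K * int m" using c0pos by simp
  hence "int m * (1 + int c0 - int K) = 1" by (simp add: algebra_simps)
  hence "int m dvd 1" by (metis dvd_triv_left)
  hence "m = 1" by simp
  thus False using mn c0n by simp
qed

end


lemma comm_direction:
  assumes gr: "group G" and fin: "finite (carrier G)" and cg: "comm_group G"
  shows "minimally_edge_connected (carrier G) (commuting_graph_edges G)"
  unfolding minimally_edge_connected_def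
proof
  interpret group G by fact
  interpret C: comm_group G by fact
  let ?V = "carrier G" and ?E = "commuting_graph_edges G"
  define n where "n = card ?V"
  fix e assume eE: "e \<in> ?E"
  then obtain p q where e: "e = {q, p}" and pq: "p \<in> ?V" "q \<in> ?V" "p \<noteq> q"
    unfolding commuting_graph_edges_def by blast
  have adj: "\<And>u v. u \<in> ?V \<Longrightarrow> v \<in> ?V \<Longrightarrow> u \<noteq> v \<Longrightarrow> {u, v} \<in> ?E"
    using CE_iff C.m_comm by blast
  have two: "2 \<le> n"
  proof -
    have "{p, q} \<subseteq> ?V" using pq by auto
    hence "card {p, q} \<le> n" unfolding n_def using fin by (simp add: card_mono)
    thus ?thesis using pq by simp
  qed
  have cfull: "\<And>x. x \<in> ?V \<Longrightarrow> cent G x = ?V" unfolding cent_def using C.m_comm by auto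
  have dg: "\<And>x. x \<in> ?V \<Longrightarrow> deg ?V ?E x = n - 1" using deg_CE[OF fin] cfull unfolding n_def by simp
  have k1: "edge_connectivity ?V ?E = n - 1"
  proof (rule ec_eq[OF fin _ pq(1) dg[OF pq(1)] CE_sub])
    show "2 \<le> card ?V" using two n_def by simp
    fix A B assume AB: "A \<union> B = ?V" "A \<inter> B = {}" "A \<noteq> {}" "B \<noteq> {}"
    show "n - 1 \<le> card (cross ?E A B)"
    proof (rule count_lemma[OF fin AB(1,2,4), where y = p])
      fix b assume b: "b \<in> B"
      obtain a where "a \<in> A" using AB(3) by blast
      thus "\<exists>a\<in>A. {a, b} \<in> ?E" using adj AB b by blast
    next
      fix b assume "b \<in> B" thus "n - 1 \<le> deg ?V ?E b" using dg AB by auto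
    qed
  qed
  have dg2: "\<And>x. x \<in> ?V \<Longrightarrow> n - 2 \<le> deg ?V (?E - {e}) x"
  proof -
    fix x assume x: "x \<in> ?V"
    show "n - 2 \<le> deg ?V (?E - {e}) x"
    proof (cases "x \<in> e")
      case False thus ?thesis using deg_minus_out[OF False] dg[OF x] by simp
    next
      case True
      hence "x = p \<or> x = q" using e by auto
      thus ?thesis
      proof
        assume "x = p" thus ?thesis using deg_minus_in[OF fin pq(3) pq(2)] eE e dg[OF x] by simp
      next
        assume "x = q" thus ?thesis using deg_minus_in[OF fin pq(3)[symmetric] pq(1)] eE e dg[OF x]
          by (simp add: insert_commute)
      qed
    qed
  qed
  have k2: "edge_connectivity ?V (?E - {e}) = n - 2"
  proof (rule ec_eq[OF fin _ pq(1)])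
    show "2 \<le> card ?V" using two n_def by simp
    show "deg ?V (?E - {e}) p = n - 2" using deg_minus_in[OF fin pq(3) pq(2)] eE e dg[OF pq(1)] by simp
    show "\<And>e'. e' \<in> ?E - {e} \<Longrightarrow> e' \<subseteq> ?V" using CE_sub by blast
    fix A B assume AB: "A \<union> B = ?V" "A \<inter> B = {}" "A \<noteq> {}" "B \<noteq> {}"
    show "n - 2 \<le> card (cross (?E - {e}) A B)"
    proof (rule count_lemma[OF fin AB(1,2,4), where y = "if p \<in> B then p else q"])
      fix b assume b: "b \<in> B" and hby: "b \<noteq> (if p \<in> B then p else q)"
      obtain a where a: "a \<in> A" using AB(3) by blast
      have "{a, b} \<in> ?E" using adj AB b a by blast
      moreover have "{a, b} \<noteq> e"
      proof
        assume "{a, b} = e"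
        hence "(a = q \<and> b = p) \<or> (a = p \<and> b = q)" using e by (simp add: doubleton_eq_iff)
        thus False using a b AB(2) hby by (cases "p \<in> B") auto
      qed
      ultimately show "\<exists>a\<in>A. {a, b} \<in> ?E - {e}" using a by blast
    next
      fix b assume "b \<in> B" thus "n - 2 \<le> deg ?V (?E - {e}) b" using dg2 AB by auto
    qed
  qed
  show "int (edge_connectivity ?V (?E - {e})) = int (edge_connectivity ?V ?E) - 1"
    using k1 k2 two by simp
qed


lemma (in group) noncomm_direction:
  assumes fin: "finite (carrier G)" and ncg: "\<not> comm_group G"
  shows "\<not> minimally_edge_connected (carrier G) (commuting_graph_edges G)"
proof
  assume me: "minimally_edge_connected (carrier G) (commuting_graph_edges G)"
  let ?V = "carrier G" and ?E = "commuting_graph_edges G"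
  obtain a b where a: "a \<in> ?V" and b: "b \<in> ?V" and nab: "a \<otimes> b \<noteq> b \<otimes> a"
    using ncg group_comm_groupI by blast
  define cc where "cc = (\<lambda>x. card (cent G x))"
  define c0 where "c0 = Min (cc ` ?V)"
  define n where "n = card ?V"
  have fimg: "finite (cc ` ?V)" using fin by (rule finite_imageI)
  have neimg: "cc ` ?V \<noteq> {}"
  proof
    assume "cc ` ?V = {}"
    with imageI[OF a, of cc] show False by simp
  qed
  have "c0 \<in> cc ` ?V" unfolding c0_def using fimg neimg by (rule Min_in)
  then obtain x0 where x0': "c0 = cc x0" "x0 \<in> ?V" by (rule imageE)
  have x0: "x0 \<in> ?V" "cc x0 = c0" using x0' by simp_all
  have min: "\<And>x. x \<in> ?V \<Longrightarrow> c0 \<le> cc x" unfolding c0_def using fimg by simp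
  have min': "\<And>x. x \<in> ?V \<Longrightarrow> card (cent G x0) \<le> card (cent G x)"
    using min x0(2) unfolding cc_def by simp
  obtain y where y: "y \<in> ?V" "y \<noteq> \<one>" "card (cent G x0) < card (cent G y)"
    using exists_big_cent[OF fin a b nab x0(1) min'] by blast
  hence y: "y \<in> ?V" "y \<noteq> \<one>" "c0 < cc y" using x0(2) unfolding cc_def by simp_all
  have ccle: "\<And>x. cc x \<le> n" unfolding cc_def n_def using cent_sub fin by (simp add: card_mono)
  have cent1: "cent G \<one> = ?V" unfolding cent_def by auto
  have cc1: "cc \<one> = n" unfolding cc_def n_def using cent1 by simp
  have dg: "\<And>x. x \<in> ?V \<Longrightarrow> deg ?V ?E x = cc x - 1" unfolding cc_def using deg_CE[OF fin] by simp
  have "a \<noteq> b" using nab by auto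
  hence two: "2 \<le> card ?V"
  proof -
    have "{a, b} \<subseteq> ?V" using a b by auto
    hence "card {a, b} \<le> card ?V" using fin by (simp add: card_mono)
    thus ?thesis using \<open>a \<noteq> b\<close> by simp
  qed
  have k1: "edge_connectivity ?V ?E = c0 - 1"
  proof (rule ec_eq[OF fin two x0(1)])
    show "deg ?V ?E x0 = c0 - 1" using dg[OF x0(1)] x0(2) by simp
    show "\<And>e. e \<in> ?E \<Longrightarrow> e \<subseteq> ?V" by (rule CE_sub)
    fix A B assume AB: "A \<union> B = ?V" "A \<inter> B = {}" "A \<noteq> {}" "B \<noteq> {}"
    show "c0 - 1 \<le> card (cross ?E A B)"
    proof (rule hub_lemma[OF fin AB one_closed, where y = "\<one>"])
      fix v assume "v \<in> ?V" thus "c0 - 1 \<le> deg ?V ?E v" using dg min by (simp add: diff_le_mono)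
    next
      fix v assume "v \<in> ?V" "v \<noteq> \<one>" thus "{\<one>, v} \<in> ?E" using CE_iff by simp
    qed
  qed
  let ?e = "{\<one>, y}"
  have eE: "?e \<in> ?E" using CE_iff y by simp
  have x0ne: "x0 \<noteq> y" "x0 \<noteq> \<one>" using x0(2) y(3) cc1 ccle[of y] by auto
  have dg2: "c0 - 1 \<le> deg ?V (?E - {?e}) v" if v: "v \<in> ?V" for v
  proof (cases "v \<in> ?e")
    case False thus ?thesis using deg_minus_out[OF False] dg[OF v] min[OF v] by (simp add: diff_le_mono)
  next
    case True
    hence "v = \<one> \<or> v = y" by auto
    thus ?thesis
    proof
      assume v1: "v = \<one>"
      have "{y, \<one>} \<in> ?E" using eE by (simp add: insert_commute)
      hence "deg ?V (?E - {{y, \<one>}}) \<one> = deg ?V ?E \<one> - 1"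
        using deg_minus_in[OF fin y(2)[symmetric] y(1)] by simp
      hence "deg ?V (?E - {?e}) \<one> = n - 1 - 1" using dg[OF one_closed] cc1 by (simp add: insert_commute)
      thus ?thesis using v1 y(3) ccle[of y] by simp
    next
      assume vy: "v = y"
      have "deg ?V (?E - {?e}) y = deg ?V ?E y - 1"
        using deg_minus_in[OF fin y(2) one_closed] eE by simp
      thus ?thesis using vy dg[OF y(1)] y(3) by simp
    qed
  qed
  have k2: "edge_connectivity ?V (?E - {?e}) = c0 - 1"
  proof (rule ec_eq[OF fin two x0(1)])
    show "deg ?V (?E - {?e}) x0 = c0 - 1"
      using deg_minus_out[of x0 ?e] x0ne dg[OF x0(1)] x0(2) by simp
    show "\<And>e. e \<in> ?E - {?e} \<Longrightarrow> e \<subseteq> ?V" using CE_sub by blast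
    fix A B assume AB: "A \<union> B = ?V" "A \<inter> B = {}" "A \<noteq> {}" "B \<noteq> {}"
    show "c0 - 1 \<le> card (cross (?E - {?e}) A B)"
    proof (rule hub_lemma[OF fin AB one_closed, where y = y])
      fix v assume "v \<in> ?V" thus "c0 - 1 \<le> deg ?V (?E - {?e}) v" by (rule dg2)
    next
      fix v assume v: "v \<in> ?V" "v \<noteq> \<one>" "v \<noteq> y"
      have "{\<one>, v} \<in> ?E" using CE_iff v by simp
      moreover have "{\<one>, v} \<noteq> ?e" using v by (auto simp: doubleton_eq_iff)
      ultimately show "{\<one>, v} \<in> ?E - {?e}" by blast
    qed
  qed
  have "int (edge_connectivity ?V (?E - {?e})) = int (edge_connectivity ?V ?E) - 1"
    using me eE unfolding minimally_edge_connected_def by blast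
  thus False using k1 k2 by simp
qed

theorem mainTheorem7:
  fixes G :: "('a, 'b) monoid_scheme"
  assumes "group G" and "finite (carrier G)"
  shows "minimally_edge_connected (carrier G) (commuting_graph_edges G) \<longleftrightarrow> comm_group G"
  using comm_direction[OF assms] group.noncomm_direction[OF assms] by blast

end
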